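(* Let $p$ be a prime and let $a,b,c$ be positive integers such that $c$ is a primitive divisor of $p^a-1$ and $bc$ is a primitive divisor of $p^{ab}-1$. Then the Waring numbers below exist and $$g\Big(\tfrac{p^{ab}-1}{bc},\,p^{ab}\Big)=b\,g\Big(\tfrac{p^a-1}{c},\,p^a\Big).$$
   Context: For a prime power $q$ and a positive integer $k$, the Waring number $g(k,q)$ is the smallest $s$ (if it exists) such that every element of $\mathbb{F}_q$ can be written as $x_1^k+\cdots+x_s^k$ with $x_i\in\mathbb{F}_q$. An integer $e$ is a primitive divisor of $p^a-1$ if $e\mid p^a-1$ and $e\nmid p^t-1$ for every $1\le t<a$. *)

theory Defs
  imports "HOL-Computational_Algebra.Primes"
begin

definition waring_repr :: "'a::comm_semiring_1 itself \<Rightarrow> nat \<Rightarrow> nat \<Rightarrow> bool" where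
  "waring_repr T k s \<longleftrightarrow>
     (\<forall>y::'a. \<exists>xs::'a list. length xs = s \<and> y = (\<Sum>x\<leftarrow>xs. x ^ k))"

definition waring_exists :: "'a::comm_semiring_1 itself \<Rightarrow> nat \<Rightarrow> bool" where
  "waring_exists T k \<longleftrightarrow> (\<exists>s. waring_repr T k s)"

definition waring_number :: "'a::comm_semiring_1 itself \<Rightarrow> nat \<Rightarrow> nat" where
  "waring_number T k = (LEAST s. waring_repr T k s)"

definition primitive_divisor :: "nat \<Rightarrow> nat \<Rightarrow> nat \<Rightarrow> bool" where
  "primitive_divisor e p a \<longleftrightarrow>
     e dvd p ^ a - 1 \<and> (\<forall>t. 1 \<le> t \<and> t < a \<longrightarrow> \<not> e dvd p ^ t - 1)"

end

theory Submission imports Defs "HOL-Algebra.Multiplicative_Group" "HOL-Computational_Algebra.Polynomial"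
begin


abbreviation cls_ring :: "'a :: {times,plus,one,zero} ring" where
  "cls_ring \<equiv> \<lparr> carrier = UNIV, mult = (*), one = 1, zero = 0, add = (+) \<rparr>"

lemma cls_field: "field (cls_ring :: 'a :: field ring)"
proof -
  have [simp]: "\<exists>y. x + y = 0" for x :: 'a by (rule exI[of _ "-x"], auto)
  have [simp]: "x \<noteq> 0 \<Longrightarrow> \<exists>y. y * x = 1 \<and> x * y = 1" for x :: 'a
    by (intro exI[of _ "inverse x"], auto)
  have [simp]: "x \<noteq> 0 \<Longrightarrow> \<exists>y. x * y = 1" for x :: 'a
    by (intro exI[of _ "inverse x"], auto)
  show ?thesis
    by (unfold_locales) (auto simp: Units_def field_simps)
qed

lemma cls_pow: "x [^]\<^bsub>(cls_ring :: 'a :: field ring)\<^esub> (n::nat) = x ^ n"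
  by (induct n) (auto simp: mult.commute)

lemma gen_exists:
  "\<exists>g::'a::{finite,field}. g \<noteq> 0 \<and> (\<forall>x. x \<noteq> 0 \<longrightarrow> (\<exists>i. x = g ^ i))"
proof -
  have "\<exists>a\<in>UNIV - {0::'a}. UNIV - {0} = {y. \<exists>i::nat. y = a [^]\<^bsub>(cls_ring::'a ring)\<^esub> i}"
    using field.finite_field_mult_group_has_gen[OF cls_field[where 'a='a]] by simp
  then show ?thesis by (auto simp: cls_pow set_eq_iff)
qed



lemma of_nat_card_eq_0: "of_nat (card (UNIV :: 'a::{finite,ring_1} set)) = (0::'a)"
proof -
  have "(\<Sum>y\<in>(UNIV::'a set). y + 1) = (\<Sum>y\<in>UNIV. y)"
    by (rule sum.reindex_bij_witness[of _ "\<lambda>y. y - 1" "\<lambda>y. y + 1"]) auto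
  hence "(\<Sum>y\<in>(UNIV::'a set). y) + of_nat (card (UNIV::'a set)) = (\<Sum>y\<in>UNIV. y)"
    by (simp add: sum.distrib)
  thus ?thesis by simp
qed

lemma CHAR_card:
  assumes "prime p" "card (UNIV :: 'a::{finite,field} set) = p ^ n"
  shows "CHAR('a) = p"
proof -
  have pos: "CHAR('a) > 0" by (rule finite_imp_CHAR_pos) simp
  have pr: "prime CHAR('a)" using prime_CHAR_semidom[OF pos] .
  have "(of_nat p :: 'a) ^ n = 0" using of_nat_card_eq_0[where 'a='a] assms(2) by simp
  hence "(of_nat p :: 'a) = 0" by simp
  hence "CHAR('a) dvd p" by (simp add: of_nat_eq_0_iff_char_dvd)
  hence "CHAR('a) = 1 \<or> CHAR('a) = p" using assms(1) by (auto simp: prime_nat_iff)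
  moreover have "CHAR('a) \<noteq> 1" using pr by auto
  ultimately show ?thesis by blast
qed

lemma fermat1:
  fixes x :: "'a :: {finite,field}"
  assumes x0: "x \<noteq> 0" shows "x ^ (card (UNIV :: 'a set) - 1) = 1"
proof -
  have c: "card (UNIV - {0::'a}) = card (UNIV :: 'a set) - 1" by (simp add: card_Diff_singleton)
  have P0: "\<Prod>(UNIV - {0::'a}) \<noteq> 0" by (simp add: prod_zero_iff)
  have "(\<Prod>y\<in>UNIV-{0}. x * y) = x ^ (card (UNIV :: 'a set) - 1) * \<Prod>(UNIV-{0})"
    by (simp add: prod.distrib c)
  moreover have "(\<Prod>y\<in>UNIV-{0}. x * y) = (\<Prod>y\<in>UNIV-{0}. y)"
    by (rule prod.reindex_bij_witness[of _ "\<lambda>y. y / x" "\<lambda>y. x * y"]) (use x0 in auto)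
  ultimately have "x ^ (card (UNIV :: 'a set) - 1) * \<Prod>(UNIV-{0}) = 1 * \<Prod>(UNIV-{0::'a})" by simp
  thus ?thesis using P0 by (metis mult_cancel_right)
qed

lemma fermat_card:
  fixes x :: "'a :: {finite,field}"
  shows "x ^ card (UNIV :: 'a set) = x"
proof -
  have cpos: "0 < card (UNIV::'a set)" by (simp add: finite_UNIV_card_ge_0)
  hence e: "card (UNIV::'a set) = Suc (card (UNIV::'a set) - 1)" by simp
  show ?thesis
  proof (cases "x = 0")
    case True thus ?thesis using cpos by simp
  next
    case False
    have "x ^ card (UNIV :: 'a set) = x * x ^ (card (UNIV :: 'a set) - 1)" by (subst e) simp
    thus ?thesis using fermat1[OF False] by simp
  qed
qed

definition ordn :: "'a::comm_monoid_mult \<Rightarrow> nat \<Rightarrow> bool" where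
  "ordn x n \<longleftrightarrow> 0 < n \<and> x ^ n = 1 \<and> inj_on (\<lambda>i. x ^ i) {..<n}"

lemma ordn_pow_mod:
  assumes "ordn x n" shows "x ^ m = x ^ (m mod n)"
proof -
  have "x ^ m = x ^ (n * (m div n) + m mod n)" by simp
  also have "\<dots> = (x ^ n) ^ (m div n) * x ^ (m mod n)" by (simp only: power_add power_mult)
  finally show ?thesis using assms by (simp add: ordn_def)
qed

lemma ordn_eq:
  assumes "ordn x n" shows "x ^ i = x ^ j \<longleftrightarrow> i mod n = j mod n"
proof -
  have n: "0 < n" and inj: "inj_on (\<lambda>i. x ^ i) {..<n}" using assms by (auto simp: ordn_def)
  have "x ^ i = x ^ j \<longleftrightarrow> x ^ (i mod n) = x ^ (j mod n)" using ordn_pow_mod[OF assms] by metis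
  also have "\<dots> \<longleftrightarrow> i mod n = j mod n" using inj n by (auto simp: inj_on_def)
  finally show ?thesis .
qed

lemma ordn_one:
  assumes "ordn x n" shows "x ^ m = 1 \<longleftrightarrow> n dvd m"
  using ordn_eq[OF assms, of m 0] by (simp add: mod_0_imp_dvd dvd_eq_mod_eq_0)

lemma gen_ordn:
  obtains g :: "'a::{finite,field}" where "ordn g (card (UNIV::'a set) - 1)"
    "\<And>x. x \<noteq> 0 \<Longrightarrow> \<exists>i < card (UNIV::'a set) - 1. x = g ^ i"
proof -
  define N where "N = card (UNIV::'a set) - 1"
  obtain g :: 'a where g0: "g \<noteq> 0" and gen: "\<And>x. x \<noteq> 0 \<Longrightarrow> \<exists>i. x = g ^ i"
    using gen_exists by blast
  have cardU: "card (UNIV::'a set) = Suc N" unfolding N_def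
    using finite_UNIV_card_ge_0[where ?'a = 'a] by simp
  have cardN: "card (UNIV - {0::'a}) = N" using cardU by (simp add: card_Diff_singleton)
  have gN: "g ^ N = 1" unfolding N_def by (rule fermat1[OF g0])
  have "0 < N"
  proof (rule ccontr)
    assume "\<not> 0 < N"
    hence "card (UNIV::'a set) = 1" using cardU by simp
    thus False by (metis card_1_singletonE UNIV_I singletonD zero_neq_one)
  qed
  have inj: "inj_on (\<lambda>i. g ^ i) {..<N}"
  proof (rule ccontr)
    assume "\<not> inj_on (\<lambda>i. g ^ i) {..<N}"
    then obtain i j where ij: "i < j" "j < N" "g ^ i = g ^ j"
      unfolding inj_on_def by (metis lessThan_iff linorder_neqE_nat)
    define d where "d = j - i"
    have d: "0 < d" "d < N" using ij by (auto simp: d_def)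
    have "i + d = j" using ij by (simp add: d_def)
    hence "g ^ i * g ^ d = g ^ i * 1" using ij by (metis power_add mult_1_right)
    hence gd: "g ^ d = 1" using g0 by simp
    have "UNIV - {0} \<subseteq> (\<lambda>i. g ^ i) ` {..<d}"
    proof
      fix x :: 'a assume "x \<in> UNIV - {0}"
      then obtain m where "x = g ^ m" using gen by auto
      also have "g ^ m = g ^ (d * (m div d) + m mod d)" by simp
      also have "\<dots> = g ^ (m mod d)" by (simp only: power_add power_mult gd power_one mult_1_left)
      finally show "x \<in> (\<lambda>i. g ^ i) ` {..<d}" using d by auto
    qed
    hence "card (UNIV - {0::'a}) \<le> card ((\<lambda>i. g ^ i) ` {..<d})" by (intro card_mono) auto
    also have "\<dots> \<le> d" using card_image_le[of "{..<d}" "\<lambda>i. g ^ i"] by simp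
    finally show False using cardN d by simp
  qed
  have o: "ordn g N" using \<open>0 < N\<close> gN inj by (simp add: ordn_def)
  show ?thesis
  proof (rule that)
    show "ordn g (card (UNIV::'a set) - 1)" using o by (simp add: N_def)
    fix x :: 'a assume "x \<noteq> 0"
    then obtain m where "x = g ^ m" using gen by auto
    hence "x = g ^ (m mod N)" using ordn_pow_mod[OF o] by simp
    moreover have "m mod N < N" using \<open>0 < N\<close> by simp
    ultimately show "\<exists>i<card (UNIV::'a set) - 1. x = g ^ i" unfolding N_def by blast
  qed
qed

lemma ordn_pow:
  assumes "ordn g N" "m * n = N" "0 < n"
  shows "ordn (g ^ m) n"
proof -
  have m: "0 < m" using assms by (auto simp: ordn_def)
  have "(g ^ m) ^ n = 1" using assms by (simp add: ordn_def flip: power_mult)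
  moreover have "inj_on (\<lambda>i. (g ^ m) ^ i) {..<n}"
  proof (rule inj_onI)
    fix i j assume ij: "i \<in> {..<n}" "j \<in> {..<n}" "(g ^ m) ^ i = (g ^ m) ^ j"
    hence "g ^ (m * i) = g ^ (m * j)" by (simp add: power_mult)
    moreover have "m * i < N" "m * j < N" using ij assms m by auto
    ultimately have "m * i = m * j" using ordn_eq[OF assms(1)] by simp
    thus "i = j" using m by simp
  qed
  ultimately show ?thesis using assms by (simp add: ordn_def)
qed

lemma ordn_frob_inj:
  fixes z :: "'a::field"
  assumes "ordn z n" "coprime n r" "0 < r"
    and prim: "\<And>t. 1 \<le> t \<Longrightarrow> t < B \<Longrightarrow> \<not> n dvd r ^ t - 1"
  shows "inj_on (\<lambda>i. z ^ (r ^ i)) {..<B}"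
proof -
  have *: False if ij: "i < j" "j < B" "z ^ (r ^ i) = z ^ (r ^ j)" for i j
  proof -
    have le: "r ^ i \<le> r ^ j" using ij assms(3) by (simp add: power_increasing)
    have "r ^ j mod n = r ^ i mod n" using ij ordn_eq[OF assms(1)] by metis
    hence "n dvd r ^ j - r ^ i" using le by (simp add: mod_eq_dvd_iff_nat)
    also have "r ^ j - r ^ i = r ^ i * (r ^ (j - i) - 1)"
      using ij by (simp add: diff_mult_distrib2 flip: power_add)
    finally have "n dvd r ^ (j - i) - 1"
      using assms(2) by (metis coprime_dvd_mult_right_iff coprime_power_right_iff)
    moreover have "1 \<le> j - i" "j - i < B" using ij by auto
    ultimately show False using prim by blast
  qed
  show ?thesis
  proof (rule inj_onI)
    fix i j assume "i \<in> {..<B}" "j \<in> {..<B}" "z ^ (r ^ i) = z ^ (r ^ j)"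
    thus "i = j" using *[of i j] *[of j i] by (metis lessThan_iff linorder_neqE_nat)
  qed
qed

lemma frob_sum:
  fixes f :: "'b \<Rightarrow> 'a::comm_ring_1"
  assumes add: "\<And>x y::'a. (x + y) ^ r = x ^ r + y ^ r" and "0 < r"
  shows "(sum f A) ^ r = sum (\<lambda>i. f i ^ r) A"
  by (induct A rule: infinite_finite_induct) (use assms in \<open>auto simp: add zero_power\<close>)

lemma IND_sum:
  fixes c :: "nat \<Rightarrow> 'a::field"
  assumes add: "\<And>x y::'a. (x + y) ^ r = x ^ r + y ^ r" and r: "0 < r"
    and fix_c: "\<And>j. j < n \<Longrightarrow> c j ^ r = c j"
    and inj: "inj_on (\<lambda>i. z ^ (r ^ i)) {..<n}"
    and zero: "(\<Sum>j<n. c j * z ^ j) = 0"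
  shows "\<And>j. j < n \<Longrightarrow> c j = 0"
proof -
  define S where "S w = (\<Sum>j<n. c j * w ^ j)" for w
  have Sr: "S (w ^ r) = S w ^ r" for w
  proof -
    have "S w ^ r = (\<Sum>j<n. (c j * w ^ j) ^ r)" unfolding S_def by (rule frob_sum[OF add r])
    also have "\<dots> = (\<Sum>j<n. c j * (w ^ r) ^ j)"
      by (intro sum.cong refl) (simp add: power_mult_distrib fix_c flip: power_mult, simp add: mult.commute)
    finally show ?thesis by (simp add: S_def)
  qed
  have Sz: "S (z ^ (r ^ i)) = 0" for i
  proof (induct i)
    case 0 thus ?case using zero by (simp add: S_def)
  next
    case (Suc i)
    have "z ^ (r ^ Suc i) = (z ^ (r ^ i)) ^ r" by (metis power_Suc2 power_mult)
    thus ?case using Sr Suc r by simp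
  qed
  define P where "P = (\<Sum>j<n. monom (c j) j)"
  have polyP: "poly P w = S w" for w by (simp add: P_def S_def poly_sum poly_monom)
  have coeffP: "coeff P i = (if i < n then c i else 0)" for i
    by (simp add: P_def coeff_sum coeff_monom)
  have "P = 0"
  proof (rule ccontr)
    assume P0: "P \<noteq> 0"
    then have n0: "n > 0" by (cases n) (auto simp: P_def)
    have "degree P \<le> n - 1" by (rule degree_le) (auto simp: coeffP)
    moreover have "(\<lambda>i. z ^ (r ^ i)) ` {..<n} \<subseteq> {x. poly P x = 0}" using Sz polyP by auto
    hence "card ((\<lambda>i. z ^ (r ^ i)) ` {..<n}) \<le> card {x. poly P x = 0}"
      by (intro card_mono poly_roots_finite P0)
    hence "n \<le> card {x. poly P x = 0}" using card_image[OF inj] by simp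
    moreover have "card {x. poly P x = 0} \<le> degree P" by (rule card_poly_roots_bound[OF P0])
    ultimately show False using n0 by simp
  qed
  show "\<And>j. j < n \<Longrightarrow> c j = 0"
  proof -
    fix j assume "j < n"
    thus "c j = 0" using coeffP[of j] \<open>P = 0\<close> by simp
  qed
qed



abbreviation ip :: "int poly \<Rightarrow> 'a::comm_ring_1 poly" where
  "ip f \<equiv> map_poly of_int f"

lemma ip_add: "ip (f + g) = (ip f + ip g :: 'a::comm_ring_1 poly)"
  by (rule poly_eqI) (simp add: coeff_map_poly)

lemma ip_diff: "ip (f - g) = (ip f - ip g :: 'a::comm_ring_1 poly)"
  by (rule poly_eqI) (simp add: coeff_map_poly)

lemma ip_mult: "ip (f * g) = (ip f * ip g :: 'a::comm_ring_1 poly)"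
  by (rule poly_eqI) (simp add: coeff_map_poly coeff_mult of_int_sum)

lemma ip_monom: "ip (monom c n) = (monom (of_int c) n :: 'a::comm_ring_1 poly)"
  by (simp add: map_poly_monom)

lemma ip_one: "ip 1 = (1 :: 'a::comm_ring_1 poly)"
  by simp

lemma poly_ip_sum:
  "poly (ip (\<Sum>i<n. monom (f i) i)) (x::'a::comm_ring_1) = (\<Sum>i<n. of_int (f i) * x ^ i)"
  by (induct n) (simp_all add: ip_add ip_monom poly_monom)

lemma poly_lt:
  fixes P :: "'a::comm_ring_1 poly"
  assumes "degree P < n" shows "poly P x = (\<Sum>i<n. coeff P i * x ^ i)"
proof -
  have "poly P x = (\<Sum>i\<le>degree P. coeff P i * x ^ i)" by (rule Polynomial.poly_altdef)
  also have "\<dots> = (\<Sum>i<n. coeff P i * x ^ i)"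
    by (rule sum.mono_neutral_left) (use assms in \<open>auto simp: coeff_eq_0\<close>)
  finally show ?thesis .
qed

lemma frob_add:
  fixes x y :: "'a::comm_ring_1"
  assumes "prime CHAR('a)" "r = CHAR('a) ^ n"
  shows "(x + y) ^ r = x ^ r + y ^ r"
  using freshmans_dream'[OF assms] .

lemma frob_diff:
  assumes add: "\<And>x y::'a::comm_ring_1. (x + y) ^ r = x ^ r + y ^ r"
  shows "(x - y) ^ r = x ^ r - (y::'a) ^ r"
  using add[of "x - y" y] by (simp add: algebra_simps)

lemma of_nat_frob:
  assumes "prime CHAR('a::comm_ring_1)"
  shows "(of_nat m :: 'a) ^ CHAR('a) = of_nat m"
proof (induct m)
  case 0 thus ?case using assms by (simp add: zero_power prime_gt_0_nat)
next
  case (Suc m)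
  have "(of_nat (Suc m) :: 'a) ^ CHAR('a) = (1 + of_nat m) ^ CHAR('a)" by simp
  also have "\<dots> = 1 + of_nat m" using freshmans_dream[OF assms refl] Suc by simp
  finally show ?case by simp
qed

lemma of_int_frob:
  assumes "prime CHAR('a::comm_ring_1)"
  shows "(of_int z :: 'a) ^ CHAR('a) = of_int z"
proof (cases "z \<ge> 0")
  case True
  hence "(of_int z :: 'a) = of_nat (nat z)" by simp
  thus ?thesis using of_nat_frob[OF assms] by simp
next
  case False
  hence e: "(of_int z :: 'a) = - of_nat (nat (- z))" by (metis of_int_minus of_int_of_nat_eq minus_minus nat_0_le neg_0_le_iff_le linorder_linear)
  have "(- (of_nat (nat (- z)) :: 'a)) ^ CHAR('a) = - ((of_nat (nat (- z))) ^ CHAR('a))"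
    by (rule minus_power_prime_CHAR[OF refl assms])
  thus ?thesis using e of_nat_frob[OF assms] by simp
qed

definition ssums :: "'a::monoid_add set \<Rightarrow> nat \<Rightarrow> 'a set" where
  "ssums P s = {sum_list ws | ws. set ws \<subseteq> P \<and> length ws = s}"

lemma ssums_0: "0 \<in> ssums P 0"
  unfolding ssums_def by (auto intro!: exI[of _ "[]"])

lemma ssums_add: "x \<in> ssums P s \<Longrightarrow> y \<in> ssums P t \<Longrightarrow> x + y \<in> ssums P (s + t)"
proof -
  assume "x \<in> ssums P s" "y \<in> ssums P t"
  then obtain ws1 ws2 where "set ws1 \<subseteq> P" "length ws1 = s" "x = sum_list ws1"
    "set ws2 \<subseteq> P" "length ws2 = t" "y = sum_list ws2" unfolding ssums_def by auto
  thus ?thesis unfolding ssums_def by (intro CollectI exI[of _ "ws1 @ ws2"]) auto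
qed

lemma sum_list_replicate0: "sum_list (replicate n (0::'a::monoid_add)) = 0"
  by (induct n) auto

lemma ssums_single: "u \<in> P \<Longrightarrow> u \<in> ssums P 1"
  unfolding ssums_def by (auto intro!: exI[of _ "[u]"])

lemma ssums_mono:
  assumes "0 \<in> P" "y \<in> ssums P s" "s \<le> t" shows "y \<in> ssums P t"
proof -
  obtain ws where ws: "set ws \<subseteq> P" "length ws = s" "y = sum_list ws" using assms(2) unfolding ssums_def by auto
  show ?thesis unfolding ssums_def
    by (rule CollectI, rule exI[of _ "ws @ replicate (t - s) 0"]) (use ws assms in \<open>auto simp: sum_list_replicate0\<close>)
qed

lemma sum_list_map_hom:
  assumes "f 0 = 0" "\<And>x y. f (x + y) = f x + f y"
  shows "f (sum_list ws) = sum_list (map f ws)"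
  by (induct ws) (simp_all add: assms)

lemma ssums_map:
  assumes "f 0 = 0" "\<And>x y. f (x + y) = f x + f y" "\<And>u. u \<in> P \<Longrightarrow> f u \<in> P'"
    and "y \<in> ssums P s"
  shows "f y \<in> ssums P' s"
proof -
  obtain ws where ws: "set ws \<subseteq> P" "length ws = s" "y = sum_list ws" using assms(4) unfolding ssums_def by auto
  show ?thesis unfolding ssums_def
    by (rule CollectI, rule exI[of _ "map f ws"]) (use ws assms sum_list_map_hom[of f ws] in auto)
qed

lemma ssums_sum:
  fixes y :: "nat \<Rightarrow> 'a::comm_monoid_add"
  assumes "\<And>j. j < n \<Longrightarrow> y j \<in> ssums P (m j)"
  shows "(\<Sum>j<n. y j) \<in> ssums P (\<Sum>j<n. m j)"
  using assms by (induct n) (auto simp: ssums_0 intro: ssums_add)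

lemma ssums_nat:
  fixes u :: "'a::semiring_1"
  assumes "u \<in> P" shows "of_nat m * u \<in> ssums P m"
proof (induct m)
  case 0 thus ?case using ssums_0[of P] by simp
next
  case (Suc m)
  have "of_nat (Suc m) * u = u + of_nat m * u" by (simp add: algebra_simps)
  thus ?case using ssums_add[OF ssums_single[OF assms] Suc] by simp
qed

lemma waring_repr_sums:
  "waring_repr TYPE('a::comm_semiring_1) k s \<longleftrightarrow> (\<forall>y::'a. y \<in> ssums {x ^ k | x. True} s)"
proof
  assume "waring_repr TYPE('a) k s"
  thus "\<forall>y::'a. y \<in> ssums {x ^ k | x. True} s"
    unfolding waring_repr_def ssums_def
  proof (intro allI CollectI)
    fix y :: 'a
    assume "\<forall>y::'a. \<exists>xs. length xs = s \<and> y = (\<Sum>x\<leftarrow>xs. x ^ k)"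
    then obtain xs where "length xs = s" "y = (\<Sum>x\<leftarrow>xs. x ^ k)" by blast
    thus "\<exists>ws. y = sum_list ws \<and> set ws \<subseteq> {x ^ k |x. True} \<and> length ws = s"
      by (intro exI[of _ "map (\<lambda>x. x ^ k) xs"]) auto
  qed
next
  assume H: "\<forall>y::'a. y \<in> ssums {x ^ k | x. True} s"
  show "waring_repr TYPE('a) k s" unfolding waring_repr_def
  proof
    fix y :: 'a
    obtain ws where ws: "set ws \<subseteq> {x ^ k | x. True}" "length ws = s" "y = sum_list ws"
      using H unfolding ssums_def by blast
    have "\<forall>w\<in>set ws. \<exists>x. w = x ^ k" using ws(1) by blast
    then obtain xs where "ws = map (\<lambda>x. x ^ k) xs" using ex_map_conv[of ws "\<lambda>x. x ^ k"] by blast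
    thus "\<exists>xs. length xs = s \<and> y = (\<Sum>x\<leftarrow>xs. x ^ k)" using ws by auto
  qed
qed



lemma nat_pow_dvd: "(x::nat) - 1 dvd x ^ n - 1"
proof (induct n)
  case 0 thus ?case by simp
next
  case (Suc n)
  show ?case
  proof (cases "x = 0")
    case True thus ?thesis by simp
  next
    case False
    hence x1: "1 \<le> x" by simp
    hence xn: "1 \<le> x ^ n" by simp
    have "x * (x ^ n - 1) = x ^ Suc n - x" by (simp add: diff_mult_distrib2)
    moreover have "x \<le> x ^ Suc n" using xn by simp
    ultimately have "x ^ Suc n - 1 = x * (x ^ n - 1) + (x - 1)" using x1 by simp
    thus ?thesis using Suc by simp
  qed
qed

lemma pow_sub_dvd:
  assumes "a dvd m" shows "(p::nat) ^ a - 1 dvd p ^ m - 1"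
proof -
  obtain d where "m = a * d" using assms by blast
  hence "p ^ m = (p ^ a) ^ d" by (simp add: power_mult)
  thus ?thesis using nat_pow_dvd[of "p ^ a" d] by simp
qed

lemma hom_inj:
  fixes \<phi> :: "'a::field \<Rightarrow> 'b::field"
  assumes add: "\<And>x y. \<phi> (x + y) = \<phi> x + \<phi> y" and mul: "\<And>x y. \<phi> (x * y) = \<phi> x * \<phi> y"
    and one: "\<phi> 1 = 1"
  shows "inj \<phi>"
proof (rule injI)
  fix x y assume e: "\<phi> x = \<phi> y"
  have "\<phi> (x - y) + \<phi> y = \<phi> x" using add[of "x - y" y] by simp
  hence z: "\<phi> (x - y) = 0" using e by simp
  show "x = y"
  proof (rule ccontr)
    assume "x \<noteq> y"
    hence "(x - y) * inverse (x - y) = 1" by simp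
    hence "\<phi> (x - y) * \<phi> (inverse (x - y)) = 1" using mul one by metis
    thus False using z by simp
  qed
qed

lemma F_basis:
  fixes \<eta> :: "'a::{finite,field}"
  assumes pr: "prime p" and ch: "CHAR('a) = p" and card: "card (UNIV::'a set) = p ^ a"
    and inj: "inj_on (\<lambda>i. \<eta> ^ (p ^ i)) {..<a}"
  shows "\<forall>y::'a. \<exists>n. (\<forall>i<a. n i < p) \<and> y = (\<Sum>i<a. of_nat (n i) * \<eta> ^ i)"
proof -
  define L where "L n = (\<Sum>i<a. of_nat (n i) * \<eta> ^ i)" for n :: "nat \<Rightarrow> nat"
  define A where "A = PiE {..<a} (\<lambda>_. {..<p})"
  have prc: "prime CHAR('a)" using pr ch by simp
  have add: "(x + y) ^ p = x ^ p + y ^ p" for x y :: 'a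
    using freshmans_dream[OF prc] ch by simp
  have p0: "0 < p" using pr prime_gt_0_nat by blast
  have injL: "inj_on L A"
  proof (rule inj_onI)
    fix n m assume nA: "n \<in> A" and mA: "m \<in> A" and e: "L n = L m"
    define c where "c i = (of_nat (n i) - of_nat (m i) :: 'a)" for i
    have "(\<Sum>i<a. c i * \<eta> ^ i) = L n - L m"
      by (simp add: c_def L_def sum_subtractf algebra_simps)
    hence z: "(\<Sum>i<a. c i * \<eta> ^ i) = 0" using e by simp
    have cp: "c i ^ p = c i" for i
      unfolding c_def frob_diff[OF add] using of_nat_frob[OF prc] ch by simp
    have c0: "\<And>j. j < a \<Longrightarrow> c j = 0" by (rule IND_sum[OF add p0 _ inj z]) (use cp in auto)
    show "n = m"
    proof (rule PiE_ext[OF nA[unfolded A_def] mA[unfolded A_def]])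
      fix i assume i: "i \<in> {..<a}"
      have lt: "n i < p" "m i < p" using nA mA i by (auto simp: A_def)
      have eq: "(of_nat (n i) :: 'a) = of_nat (m i)" using c0[of i] i by (simp add: c_def)
      have "n i - m i = 0"
      proof -
        have "(of_nat (n i - m i) :: 'a) = 0"
          by (cases "m i \<le> n i") (simp_all add: of_nat_diff eq)
        hence "p dvd n i - m i" using ch by (simp add: of_nat_eq_0_iff_char_dvd)
        thus ?thesis using lt by (metis dvd_imp_le less_imp_diff_less not_less neq0_conv)
      qed
      moreover have "m i - n i = 0"
      proof -
        have "(of_nat (m i - n i) :: 'a) = 0"
          by (cases "n i \<le> m i") (simp_all add: of_nat_diff eq)
        hence "p dvd m i - n i" using ch by (simp add: of_nat_eq_0_iff_char_dvd)
        thus ?thesis using lt by (metis dvd_imp_le less_imp_diff_less not_less neq0_conv)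
      qed
      ultimately show "n i = m i" by simp
    qed
  qed
  have cA: "card A = p ^ a" by (simp add: A_def card_PiE)
  have "card (L ` A) = card (UNIV::'a set)" using card_image[OF injL] cA card by simp
  hence "L ` A = UNIV" by (rule card_eq_UNIV_imp_eq_UNIV[OF finite_UNIV])
  show ?thesis
  proof
    fix y :: 'a
    have "y \<in> L ` A" using \<open>L ` A = UNIV\<close> by simp
    then obtain n where "n \<in> A" "y = L n" by blast
    thus "\<exists>n. (\<forall>i<a. n i < p) \<and> y = (\<Sum>i<a. of_nat (n i) * \<eta> ^ i)"
      by (intro exI[of _ n]) (auto simp: A_def L_def)
  qed
qed

lemma F_unique_int:
  fixes \<eta> :: "'a::{finite,field}"
  assumes pr: "prime p" and ch: "CHAR('a) = p"
    and inj: "inj_on (\<lambda>i. \<eta> ^ (p ^ i)) {..<a}"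
    and deg: "degree f < a" and z: "poly (ip f) \<eta> = 0"
  shows "int p dvd coeff f i"
proof -
  have prc: "prime CHAR('a)" using pr ch by simp
  have add: "(x + y) ^ p = x ^ p + y ^ p" for x y :: 'a
    using freshmans_dream[OF prc] ch by simp
  have p0: "0 < p" using pr prime_gt_0_nat by blast
  have dg: "degree (ip f :: 'a poly) < a"
  proof -
    have "degree (ip f :: 'a poly) \<le> degree f"
      by (rule degree_le) (simp add: coeff_map_poly coeff_eq_0)
    thus ?thesis using deg by simp
  qed
  have "(\<Sum>j<a. (of_int (coeff f j) :: 'a) * \<eta> ^ j) = 0"
    using z poly_lt[OF dg, of \<eta>] by (simp add: coeff_map_poly)
  hence c0: "\<And>j. j < a \<Longrightarrow> (of_int (coeff f j) :: 'a) = 0"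
    by (rule IND_sum[OF add p0 _ inj, rotated]) (use of_int_frob[OF prc] ch in auto)
  show ?thesis
  proof (cases "i < a")
    case True
    thus ?thesis using c0[OF True] ch by (simp add: of_int_eq_0_iff_char_dvd)
  next
    case False
    hence "coeff f i = 0" using deg by (simp add: coeff_eq_0)
    thus ?thesis by simp
  qed
qed



lemma ip_zero_if_dvd:
  assumes "\<And>i. int CHAR('b) dvd coeff f i"
  shows "(ip f :: 'b::comm_ring_1 poly) = 0"
  by (rule poly_eqI) (use assms in \<open>simp add: coeff_map_poly of_int_eq_0_iff_char_dvd\<close>)

lemma card_roots_q:
  assumes cardE: "card (UNIV::'b::{finite,field} set) = p ^ m" and "a dvd m" and p1: "1 < p" and a0: "0 < a"
  shows "p ^ a \<le> card {y::'b. y ^ (p ^ a) = y}"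
proof -
  define q where "q = p ^ a"
  define Q where "Q = p ^ m"
  obtain G :: 'b where G: "ordn G (Q - 1)"
    using gen_ordn cardE Q_def by metis
  have q1: "1 < q" using p1 a0 unfolding q_def by (metis one_less_power)
  have dv: "q - 1 dvd Q - 1" unfolding q_def Q_def by (rule pow_sub_dvd[OF \<open>a dvd m\<close>])
  define e where "e = (Q - 1) div (q - 1)"
  have eq: "e * (q - 1) = Q - 1" using dv by (simp add: e_def)
  have Ge: "ordn (G ^ e) (q - 1)" by (rule ordn_pow[OF G eq]) (use q1 in simp)
  have Ge1: "(G ^ e) ^ (q - 1) = 1" using Ge by (simp add: ordn_def)
  have inj: "inj_on (\<lambda>i. (G ^ e) ^ i) {..<q - 1}" using Ge by (simp add: ordn_def)
  have sub: "insert 0 ((\<lambda>i. (G ^ e) ^ i) ` {..<q - 1}) \<subseteq> {y::'b. y ^ q = y}"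
  proof
    fix y assume "y \<in> insert 0 ((\<lambda>i. (G ^ e) ^ i) ` {..<q - 1})"
    then consider "y = 0" | i where "y = (G ^ e) ^ i" by blast
    thus "y \<in> {y. y ^ q = y}"
    proof cases
      case 1 thus ?thesis using q1 by simp
    next
      case 2
      have "y ^ (q - 1) = 1" unfolding 2 by (metis Ge1 mult.commute power_mult power_one)
      moreover have "y ^ q = y * y ^ (q - 1)" using q1 by (metis Suc_diff_1 less_trans zero_less_one power_Suc)
      ultimately show ?thesis by simp
    qed
  qed
  have n0: "0 \<notin> (\<lambda>i. (G ^ e) ^ i) ` {..<q - 1}"
  proof
    assume "0 \<in> (\<lambda>i. (G ^ e) ^ i) ` {..<q - 1}"
    then obtain i where "(G ^ e) ^ i = 0" by (metis (no_types, lifting) imageE)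
    hence "G ^ e = 0" by simp
    hence "(G ^ e) ^ (q - 1) = 0" using q1 by simp
    thus False using Ge1 by (metis zero_neq_one)
  qed
  have "card (insert 0 ((\<lambda>i. (G ^ e) ^ i) ` {..<q - 1})) = q"
    using n0 card_image[OF inj] q1 by simp
  moreover have "card (insert 0 ((\<lambda>i. (G ^ e) ^ i) ` {..<q - 1})) \<le> card {y::'b. y ^ q = y}"
    by (rule card_mono[OF _ sub]) simp
  ultimately show ?thesis by (simp add: q_def)
qed



lemma embed:
  fixes \<eta> :: "'a::{finite,field}"
  assumes pr: "prime p" and chF: "CHAR('a) = p" and cardF: "card (UNIV::'a set) = p ^ a" and a0: "0 < a"
    and inj: "inj_on (\<lambda>i. \<eta> ^ (p ^ i)) {..<a}"
    and chE: "CHAR('b) = p" and cardE: "card (UNIV::'b set) = p ^ m" and am: "a dvd m"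
  obtains \<phi> :: "'a \<Rightarrow> 'b::{finite,field}" where "\<And>x y. \<phi> (x + y) = \<phi> x + \<phi> y" "\<And>x y. \<phi> (x * y) = \<phi> x * \<phi> y" "\<phi> 1 = 1"
proof -
  obtain n0 where n0: "\<eta> ^ a = (\<Sum>i<a. of_nat (n0 i) * \<eta> ^ i)"
    using F_basis[OF pr chF cardF inj] by blast
  define M :: "int poly" where "M = monom 1 a - (\<Sum>i<a. monom (int (n0 i)) i)"
  have coeffM: "coeff M i = (if i = a then 1 else 0) - (if i < a then int (n0 i) else 0)" for i
    by (simp add: M_def coeff_sum coeff_monom)
  have degM: "degree M = a"
  proof (rule antisym)
    show "degree M \<le> a" by (rule degree_le) (simp add: coeffM)
    show "a \<le> degree M" by (rule le_degree) (simp add: coeffM)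
  qed
  have lcM: "coeff M (degree M) = 1" using degM coeffM by simp
  have M0: "M \<noteq> 0" using lcM by auto
  have divM: "\<exists>u r. f = M * u + r \<and> (r = 0 \<or> degree r < a)" for f
  proof -
    obtain u r where ur: "pseudo_divmod f M = (u, r)" by (cases "pseudo_divmod f M") auto
    from pseudo_divmod[OF M0 ur] show ?thesis using lcM degM by auto
  qed
  have polyMF: "poly (ip M :: 'a poly) \<eta> = 0"
    by (simp add: M_def ip_diff ip_monom poly_monom poly_ip_sum n0)
  have transfer: "\<exists>u. (ip f :: 'b poly) = ip M * ip u" if z: "poly (ip f :: 'a poly) \<eta> = 0" for f
  proof -
    obtain u r where fr: "f = M * u + r" and r: "r = 0 \<or> degree r < a" using divM by blast
    have zr: "poly (ip r :: 'a poly) \<eta> = 0" using z polyMF by (simp add: fr ip_add ip_mult)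
    have "ip r = (0 :: 'b poly)"
    proof (cases "r = 0")
      case True thus ?thesis by simp
    next
      case False
      hence "degree r < a" using r by simp
      thus ?thesis using F_unique_int[OF pr chF inj _ zr] chE by (intro ip_zero_if_dvd) simp
    qed
    thus ?thesis by (intro exI[of _ u]) (simp add: fr ip_add ip_mult)
  qed
  define q where "q = p ^ a"
  have p1: "1 < p" using pr prime_gt_1_nat by blast
  have q1: "1 < q" using p1 a0 unfolding q_def by (metis one_less_power)
  define XQ :: "int poly" where "XQ = monom 1 q - monom 1 1"
  have "poly (ip XQ :: 'a poly) \<eta> = 0"
    using fermat_card[of \<eta>] cardF by (simp add: XQ_def ip_diff ip_monom poly_monom q_def)
  then obtain u where XQu: "(ip XQ :: 'b poly) = ip M * ip u" using transfer by blast
  have "\<exists>\<theta>::'b. poly (ip M) \<theta> = 0"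
  proof (rule ccontr)
    assume no: "\<not> (\<exists>\<theta>::'b. poly (ip M) \<theta> = 0)"
    have cXQ: "coeff (ip XQ :: 'b poly) i = (if i = q then 1 else 0) - (if i = 1 then 1 else 0)" for i
      by (simp add: XQ_def ip_diff ip_monom coeff_monom)
    have dXQ: "degree (ip XQ :: 'b poly) = q"
    proof (rule antisym)
      show "degree (ip XQ :: 'b poly) \<le> q" by (rule degree_le) (use q1 in \<open>simp add: cXQ\<close>)
      show "q \<le> degree (ip XQ :: 'b poly)" by (rule le_degree) (use q1 in \<open>simp add: cXQ\<close>)
    qed
    have cMb: "coeff (ip M :: 'b poly) i = of_int (coeff M i)" for i by (simp add: coeff_map_poly)
    have M0b: "(ip M :: 'b poly) \<noteq> 0"
    proof
      assume "(ip M :: 'b poly) = 0"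
      hence "coeff (ip M :: 'b poly) a = 0" by simp
      thus False by (simp add: cMb coeffM)
    qed
    have dMb: "degree (ip M :: 'b poly) = a"
    proof (rule antisym)
      show "degree (ip M :: 'b poly) \<le> a" by (rule degree_le) (simp add: cMb coeffM)
      show "a \<le> degree (ip M :: 'b poly)" by (rule le_degree) (simp add: cMb coeffM)
    qed
    have u0: "(ip u :: 'b poly) \<noteq> 0"
    proof
      assume "(ip u :: 'b poly) = 0"
      hence "coeff (ip XQ :: 'b poly) q = 0" using XQu by simp
      thus False using q1 by (simp add: cXQ)
    qed
    have "degree (ip XQ :: 'b poly) = a + degree (ip u :: 'b poly)"
      using XQu degree_mult_eq[OF M0b u0] dMb by simp
    hence du: "degree (ip u :: 'b poly) = q - a" using dXQ by simp
    have "{y::'b. y ^ q = y} \<subseteq> {y. poly (ip u) y = 0}"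
    proof
      fix y :: 'b assume "y \<in> {y. y ^ q = y}"
      hence "poly (ip XQ :: 'b poly) y = 0" by (simp add: XQ_def ip_diff ip_monom poly_monom)
      hence "poly (ip M) y * poly (ip u) y = 0" by (simp add: XQu)
      thus "y \<in> {y. poly (ip u) y = 0}" using no by auto
    qed
    hence "card {y::'b. y ^ q = y} \<le> card {y. poly (ip u :: 'b poly) y = 0}"
      by (intro card_mono) simp_all
    also have "\<dots> \<le> q - a" using card_poly_roots_bound[OF u0] du by simp
    finally have c1: "card {y::'b. y ^ q = y} \<le> q - a" .
    moreover have "q \<le> card {y::'b. y ^ q = y}" using card_roots_q[OF cardE am p1 a0] by (simp add: q_def)
    ultimately show False using a0 q1 by simp
  qed
  then obtain \<theta> :: 'b where \<theta>: "poly (ip M) \<theta> = 0" by blast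
  have vanish: "poly (ip f :: 'b poly) \<theta> = 0" if hf: "poly (ip f :: 'a poly) \<eta> = 0" for f
  proof -
    obtain u where "(ip f :: 'b poly) = ip M * ip u" using transfer[OF hf] by blast
    thus ?thesis using \<theta> by simp
  qed
  have rep_ex: "\<exists>f. poly (ip f :: 'a poly) \<eta> = y" for y
  proof -
    obtain n where "y = (\<Sum>i<a. of_nat (n i) * \<eta> ^ i)" using F_basis[OF pr chF cardF inj] by blast
    thus ?thesis by (intro exI[of _ "\<Sum>i<a. monom (int (n i)) i"]) (simp add: poly_ip_sum)
  qed
  define \<phi> where "\<phi> y = poly (ip (SOME f. poly (ip f :: 'a poly) \<eta> = y) :: 'b poly) \<theta>" for y
  have \<phi>_eq: "\<phi> y = poly (ip f :: 'b poly) \<theta>" if fy: "poly (ip f :: 'a poly) \<eta> = y" for f y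
  proof -
    define g where "g = (SOME f. poly (ip f :: 'a poly) \<eta> = y)"
    have gy: "poly (ip g :: 'a poly) \<eta> = y" using someI_ex[OF rep_ex[of y]] by (simp add: g_def)
    have "poly (ip (g - f) :: 'a poly) \<eta> = 0" using gy fy by (simp add: ip_diff)
    hence "poly (ip (g - f) :: 'b poly) \<theta> = 0" by (rule vanish)
    thus ?thesis by (simp add: \<phi>_def g_def[symmetric] ip_diff)
  qed
  show ?thesis
  proof (rule that)
    fix x y :: 'a
    obtain f where f: "poly (ip f :: 'a poly) \<eta> = x" using rep_ex by blast
    obtain g where g: "poly (ip g :: 'a poly) \<eta> = y" using rep_ex by blast
    have "\<phi> (x + y) = poly (ip (f + g) :: 'b poly) \<theta>" by (rule \<phi>_eq) (simp add: ip_add f g)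
    thus "\<phi> (x + y) = \<phi> x + \<phi> y" using \<phi>_eq[OF f] \<phi>_eq[OF g] by (simp add: ip_add)
    have "\<phi> (x * y) = poly (ip (f * g) :: 'b poly) \<theta>" by (rule \<phi>_eq) (simp add: ip_mult f g)
    thus "\<phi> (x * y) = \<phi> x * \<phi> y" using \<phi>_eq[OF f] \<phi>_eq[OF g] by (simp add: ip_mult)
  next
    show "\<phi> 1 = 1" using \<phi>_eq[of 1 1] by simp
  qed
qed



lemma coprime_of_dvd_pow:
  fixes d p :: nat
  assumes "d dvd p ^ a - 1" "0 < a" "0 < p"
  shows "coprime d p"
proof (rule coprimeI)
  fix g assume gd: "g dvd d" and gp: "g dvd p"
  have "g dvd p ^ a" using gp assms(2) by (simp add: dvd_power_iff_le dvd_trans[OF gp] dvd_power)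
  moreover have "g dvd p ^ a - 1" using gd assms(1) by (rule dvd_trans)
  ultimately have "g dvd p ^ a - (p ^ a - 1)" by (rule dvd_diff_nat)
  moreover have "p ^ a - (p ^ a - 1) = 1" using assms(3) by simp
  ultimately show "is_unit g" by simp
qed

lemma split_pick:
  fixes n :: "nat \<Rightarrow> nat"
  assumes "(\<Sum>j<b. n j) = S" "0 < b"
  shows "\<exists>j<b. n j \<le> S div b"
proof (rule ccontr)
  assume "\<not> ?thesis"
  hence "\<And>j. j \<in> {..<b} \<Longrightarrow> S div b + 1 \<le> n j" by auto
  hence "of_nat (card {..<b}) * (S div b + 1) \<le> (\<Sum>j<b. n j)" by (rule sum_bounded_below)
  hence "b * (S div b) + b \<le> S" using assms by (simp add: algebra_simps)
  moreover have "S < b * (S div b) + b"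
    using assms(2) by (metis add_less_cancel_left div_mult_mod_eq mod_less_divisor mult.commute)
  ultimately show False by simp
qed



theorem mainTheorem3:
  fixes p a b c :: nat
  assumes "prime p" and "a > 0" and "b > 0" and "c > 0"
    and "primitive_divisor c p a"
    and "primitive_divisor (b * c) p (a * b)"
    and "card (UNIV :: 'f1 set) = p ^ a"
    and "card (UNIV :: 'f2 set) = p ^ (a * b)"
  shows "waring_exists TYPE('f1::{finite,field}) ((p ^ a - 1) div c)
       \<and> waring_exists TYPE('f2::{finite,field}) ((p ^ (a * b) - 1) div (b * c))
       \<and> waring_number TYPE('f2) ((p ^ (a * b) - 1) div (b * c))
           = b * waring_number TYPE('f1) ((p ^ a - 1) div c)"
proof -
  note pr = assms(1) and a0 = assms(2) and b0 = assms(3) and c0 = assms(4)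
  note cardF = assms(7) and cardE = assms(8)
  define q where "q = p ^ a"
  define Q where "Q = p ^ (a * b)"
  define k where "k = (p ^ a - 1) div c"
  define K where "K = (p ^ (a * b) - 1) div (b * c)"
  have p1: "1 < p" using pr prime_gt_1_nat by blast
  have p0: "0 < p" using p1 by simp
  have q1: "1 < q" using p1 a0 unfolding q_def by (metis one_less_power)
  have ab0: "0 < a * b" using a0 b0 by simp
  have Q1: "1 < Q" using p1 ab0 unfolding Q_def by (metis one_less_power)
  have Qq: "Q = q ^ b" by (simp add: Q_def q_def power_mult)
  have cdv: "c dvd q - 1" and primc: "\<And>t. 1 \<le> t \<Longrightarrow> t < a \<Longrightarrow> \<not> c dvd p ^ t - 1"
    using assms(5) by (auto simp: primitive_divisor_def q_def)
  have bcdv: "b * c dvd Q - 1" and primbc: "\<And>t. 1 \<le> t \<Longrightarrow> t < a * b \<Longrightarrow> \<not> b * c dvd p ^ t - 1"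
    using assms(6) by (auto simp: primitive_divisor_def Q_def)
  have kc: "k * c = q - 1" using cdv by (simp add: k_def q_def)
  have Kbc: "K * (b * c) = Q - 1" using bcdv by (simp add: K_def Q_def)
  have k0: "0 < k" using kc q1 by (cases k) auto
  have K0: "0 < K" using Kbc Q1 by (cases K) auto
  have chF: "CHAR('f1) = p" by (rule CHAR_card[OF pr cardF])
  have chE: "CHAR('f2) = p" by (rule CHAR_card[OF pr cardE])
  have prF: "prime CHAR('f1)" and prE: "prime CHAR('f2)" using chF chE pr by simp_all
  obtain g1 :: 'f1 where g1: "ordn g1 (q - 1)" and g1gen: "\<And>x. x \<noteq> 0 \<Longrightarrow> \<exists>i. x = g1 ^ i"
    using gen_ordn[where 'a='f1] cardF unfolding q_def by metis
  obtain G :: 'f2 where G: "ordn G (Q - 1)" and Ggen: "\<And>x. x \<noteq> 0 \<Longrightarrow> \<exists>i. x = G ^ i"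
    using gen_ordn[where 'a='f2] cardE unfolding Q_def by metis
  define \<eta> where "\<eta> = g1 ^ k"
  define \<zeta> where "\<zeta> = G ^ K"
  have \<eta>o: "ordn \<eta> c" unfolding \<eta>_def by (rule ordn_pow[OF g1 kc c0])
  have \<zeta>o: "ordn \<zeta> (b * c)" unfolding \<zeta>_def by (rule ordn_pow[OF G Kbc]) (use b0 c0 in simp)
  have copc: "coprime c p" using coprime_of_dvd_pow[OF _ a0 p0] cdv by (simp add: q_def)
  have copbc: "coprime (b * c) p" using coprime_of_dvd_pow[OF _ ab0 p0] bcdv unfolding Q_def by blast
  have inj\<eta>: "inj_on (\<lambda>i. \<eta> ^ (p ^ i)) {..<a}"
    by (rule ordn_frob_inj[OF \<eta>o copc p0 primc])
  have inj\<zeta>: "inj_on (\<lambda>i. \<zeta> ^ (q ^ i)) {..<b}"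
  proof (rule ordn_frob_inj[OF \<zeta>o])
    show "coprime (b * c) q" using copbc by (simp add: q_def)
    show "0 < q" using q1 by simp
    fix t assume t: "1 \<le> t" "t < b"
    have "q ^ t = p ^ (a * t)" by (simp add: q_def power_mult)
    moreover have "1 \<le> a * t" "a * t < a * b" using t a0 by auto
    ultimately show "\<not> b * c dvd q ^ t - 1" using primbc by simp
  qed
  obtain \<phi> :: "'f1 \<Rightarrow> 'f2" where \<phi>add: "\<And>x y. \<phi> (x + y) = \<phi> x + \<phi> y"
    and \<phi>mul: "\<And>x y. \<phi> (x * y) = \<phi> x * \<phi> y" and \<phi>1: "\<phi> 1 = 1"
    using embed[OF pr chF cardF a0 inj\<eta> chE cardE] by (metis dvd_triv_left)
  have inj\<phi>: "inj \<phi>" by (rule hom_inj[OF \<phi>add \<phi>mul \<phi>1])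
  have \<phi>0: "\<phi> 0 = 0" using \<phi>add[of 0 0] by (metis add_0_right add_left_cancel)
  have \<phi>diff: "\<phi> (x - y) = \<phi> x - \<phi> y" for x y using \<phi>add[of "x - y" y] by (simp add: algebra_simps)
  have \<phi>pow: "\<phi> (x ^ n) = \<phi> x ^ n" for x n by (induct n) (simp_all add: \<phi>1 \<phi>mul)
  define \<theta> where "\<theta> = \<phi> \<eta>"
  define PF where "PF = {x ^ k | x :: 'f1. True}"
  define PE where "PE = {x ^ K | x :: 'f2. True}"
  have PF0: "(0::'f1) \<in> PF" unfolding PF_def using k0 by (auto intro!: exI[of _ 0])
  have PE0: "(0::'f2) \<in> PE" unfolding PE_def using K0 by (auto intro!: exI[of _ 0])
  have PF\<eta>: "\<eta> ^ i \<in> PF" for i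
    unfolding PF_def \<eta>_def by (auto intro!: exI[of _ "g1 ^ i"] simp flip: power_mult simp: mult.commute)
  have PE\<zeta>: "\<zeta> ^ i \<in> PE" for i
    unfolding PE_def \<zeta>_def by (auto intro!: exI[of _ "G ^ i"] simp flip: power_mult simp: mult.commute)
  have PFcases: "t = 0 \<or> (\<exists>i. t = \<eta> ^ i)" if tP: "t \<in> PF" for t
  proof -
    obtain x where x: "t = x ^ k" using tP unfolding PF_def by blast
    show ?thesis
    proof (cases "x = 0")
      case True thus ?thesis using x k0 by simp
    next
      case False
      then obtain i where "x = g1 ^ i" using g1gen by blast
      hence "t = \<eta> ^ i" using x unfolding \<eta>_def by (simp flip: power_mult add: mult.commute)
      thus ?thesis by blast
    qed
  qed
  have PEcases: "t = 0 \<or> (\<exists>i. t = \<zeta> ^ i)" if tP: "t \<in> PE" for t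
  proof -
    obtain x where x: "t = x ^ K" using tP unfolding PE_def by blast
    show ?thesis
    proof (cases "x = 0")
      case True thus ?thesis using x K0 by simp
    next
      case False
      then obtain i where "x = G ^ i" using Ggen by blast
      hence "t = \<zeta> ^ i" using x unfolding \<zeta>_def by (simp flip: power_mult add: mult.commute)
      thus ?thesis by blast
    qed
  qed
  define B where "B = {x :: 'f2. x ^ c = 1}"
  define Pc :: "'f2 poly" where "Pc = monom 1 c - 1"
  have Pc0: "Pc \<noteq> 0"
  proof
    assume "Pc = 0"
    hence "coeff Pc c = 0" by simp
    thus False using c0 by (simp add: Pc_def coeff_monom)
  qed
  have "degree Pc \<le> c" unfolding Pc_def by (rule degree_diff_le) (simp_all add: degree_monom_le)
  moreover have "B = {x. poly Pc x = 0}" by (simp add: B_def Pc_def poly_monom)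
  ultimately have cardB: "card B \<le> c" using card_poly_roots_bound[OF Pc0] by simp
  define A where "A = (\<lambda>s. \<theta> ^ s) ` {..<c}"
  define C where "C = (\<lambda>l. \<zeta> ^ (b * l)) ` {..<c}"
  have \<eta>c: "\<eta> ^ c = 1" using \<eta>o by (simp add: ordn_def)
  have \<theta>c: "\<theta> ^ c = 1" using \<eta>c \<phi>pow \<phi>1 by (simp add: \<theta>_def flip: \<phi>pow)
  have \<theta>B: "\<theta> ^ s \<in> B" for s by (simp add: B_def \<theta>c flip: power_mult, simp add: mult.commute power_mult \<theta>c)
  have \<zeta>B: "\<zeta> ^ (b * l) \<in> B" for l
  proof -
    have "(\<zeta> ^ (b * l)) ^ c = (\<zeta> ^ (b * c)) ^ l" by (simp flip: power_mult add: ac_simps)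
    thus ?thesis using \<zeta>o by (simp add: B_def ordn_def)
  qed
  have cardA: "card A = c"
  proof -
    have "inj_on (\<lambda>s. \<theta> ^ s) {..<c}"
    proof (rule inj_onI)
      fix i j assume ij: "i \<in> {..<c}" "j \<in> {..<c}" "\<theta> ^ i = \<theta> ^ j"
      hence "\<phi> (\<eta> ^ i) = \<phi> (\<eta> ^ j)" by (simp add: \<theta>_def \<phi>pow)
      hence "\<eta> ^ i = \<eta> ^ j" using inj\<phi> by (simp add: inj_eq)
      thus "i = j" using ij \<eta>o by (auto simp: ordn_def inj_on_def)
    qed
    thus ?thesis by (simp add: A_def card_image)
  qed
  have cardC: "card C = c"
  proof -
    have "inj_on (\<lambda>l. \<zeta> ^ (b * l)) {..<c}"
    proof (rule inj_onI)
      fix i j assume ij: "i \<in> {..<c}" "j \<in> {..<c}" "\<zeta> ^ (b * i) = \<zeta> ^ (b * j)"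
      have "b * i < b * c" "b * j < b * c" using ij b0 by auto
      moreover have "inj_on (\<lambda>i. \<zeta> ^ i) {..<b * c}" using \<zeta>o by (simp add: ordn_def)
      ultimately have "b * i = b * j" using inj_onD[of "\<lambda>i. \<zeta> ^ i" "{..<b * c}" "b * i" "b * j"] ij by simp
      thus "i = j" using b0 by simp
    qed
    thus ?thesis by (simp add: C_def card_image)
  qed
  have AsB: "A \<subseteq> B" using \<theta>B by (auto simp: A_def)
  have CsB: "C \<subseteq> B" using \<zeta>B by (auto simp: C_def)
  have "card A \<le> card B" by (rule card_mono[OF _ AsB]) simp
  hence cB: "card B = c" using cardA cardB by simp
  have AB: "A = B" by (rule card_subset_eq[OF _ AsB]) (simp_all add: cB cardA)
  have CB: "C = B" by (rule card_subset_eq[OF _ CsB]) (simp_all add: cB cardC)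
  have \<theta>\<zeta>: "\<exists>l. \<theta> ^ s = \<zeta> ^ (b * l)" for s
    using \<theta>B[of s] CB by (auto simp: C_def)
  have \<zeta>\<theta>: "\<exists>s. \<zeta> ^ (b * l) = \<theta> ^ s" for l
    using \<zeta>B[of l] AB by (auto simp: A_def)
  define crd where "crd Y = (\<Sum>j<b. \<zeta> ^ j * \<phi> (Y j))" for Y :: "nat \<Rightarrow> 'f1"
  have addq: "(x + y) ^ q = x ^ q + y ^ q" for x y :: 'f2
    by (rule frob_add[OF prE]) (simp add: chE q_def)
  have fermF: "x ^ q = x" for x :: 'f1 using fermat_card[of x] cardF by (simp add: q_def)
  have uniq: "Y j = Y' j" if e: "crd Y = crd Y'" and j: "j < b" for Y Y' j
  proof -
    define cc where "cc j = \<phi> (Y j - Y' j)" for j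
    have "(\<Sum>j<b. cc j * \<zeta> ^ j) = crd Y - crd Y'"
      by (simp add: cc_def crd_def \<phi>diff sum_subtractf algebra_simps)
    hence z: "(\<Sum>j<b. cc j * \<zeta> ^ j) = 0" using e by simp
    have ccq: "cc j ^ q = cc j" for j by (simp add: cc_def fermF flip: \<phi>pow)
    have "cc j = 0" by (rule IND_sum[OF addq _ _ inj\<zeta> z j]) (use q1 ccq in auto)
    hence "\<phi> (Y j - Y' j) = \<phi> 0" by (simp add: cc_def \<phi>0)
    hence "Y j - Y' j = 0" using inj\<phi> by (simp add: inj_eq)
    thus ?thesis by simp
  qed
  have surj: "\<exists>Y. x = crd Y" for x
  proof -
    define D where "D = PiE {..<b} (\<lambda>_. (UNIV :: 'f1 set))"
    have injD: "inj_on crd D"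
    proof (rule inj_onI)
      fix Y Y' assume YD: "Y \<in> D" "Y' \<in> D" and e: "crd Y = crd Y'"
      show "Y = Y'" by (rule PiE_ext[OF YD(1)[unfolded D_def] YD(2)[unfolded D_def]]) (use uniq[OF e] in auto)
    qed
    have "card D = Q" by (simp add: D_def card_PiE cardF Qq q_def)
    hence "card (crd ` D) = card (UNIV :: 'f2 set)" using card_image[OF injD] cardE by (simp add: Q_def)
    hence "crd ` D = UNIV" by (rule card_eq_UNIV_imp_eq_UNIV[OF finite_UNIV])
    thus ?thesis by (metis UNIV_I imageE)
  qed
  have mapPE: "\<zeta> ^ j * \<phi> t \<in> PE" if "t \<in> PF" for t j
  proof -
    from PFcases[OF that] show ?thesis
    proof
      assume "t = 0" thus ?thesis using PE0 by (simp add: \<phi>0)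
    next
      assume "\<exists>i. t = \<eta> ^ i"
      then obtain i where i: "t = \<eta> ^ i" by blast
      obtain l where l: "\<theta> ^ i = \<zeta> ^ (b * l)" using \<theta>\<zeta> by blast
      have "\<zeta> ^ j * \<phi> t = \<zeta> ^ (j + b * l)" using i l by (simp add: \<phi>pow \<theta>_def power_add)
      thus ?thesis using PE\<zeta> by simp
    qed
  qed
  have partA: "waring_repr TYPE('f2) K (b * s)" if H: "waring_repr TYPE('f1) k s" for s
  proof -
    have H': "\<forall>y::'f1. y \<in> ssums PF s" using H by (simp add: waring_repr_sums PF_def)
    have "\<forall>x::'f2. x \<in> ssums PE (b * s)"
    proof
      fix x :: 'f2
      obtain Y where x: "x = crd Y" using surj by blast
      have "\<zeta> ^ j * \<phi> (Y j) \<in> ssums PE s" if "j < b" for j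
        by (rule ssums_map[where f="\<lambda>t. \<zeta> ^ j * \<phi> t" and P=PF and P'=PE]) (use H' mapPE in \<open>auto simp: \<phi>0 \<phi>add algebra_simps\<close>)
      hence "crd Y \<in> ssums PE (\<Sum>j<b. s)" unfolding crd_def by (rule ssums_sum)
      thus "x \<in> ssums PE (b * s)" using x by (simp add: mult.commute)
    qed
    thus ?thesis by (simp add: waring_repr_sums PE_def)
  qed
  have PEdec: "\<exists>j u. j < b \<and> u \<in> PF \<and> w = \<zeta> ^ j * \<phi> u" if wP: "w \<in> PE" for w
  proof -
    from PEcases[OF wP] show ?thesis
    proof
      assume "w = 0" thus ?thesis using b0 PF0 by (intro exI[of _ 0] exI[of _ 0]) (simp add: \<phi>0)
    next
      assume "\<exists>i. w = \<zeta> ^ i"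
      then obtain m where m: "w = \<zeta> ^ m" by blast
      obtain s where s: "\<zeta> ^ (b * (m div b)) = \<theta> ^ s" using \<zeta>\<theta> by blast
      have "\<zeta> ^ m = \<zeta> ^ (m mod b + b * (m div b))" by simp
      also have "\<dots> = \<zeta> ^ (m mod b) * \<phi> (\<eta> ^ s)" by (simp only: power_add s \<theta>_def \<phi>pow)
      finally have "w = \<zeta> ^ (m mod b) * \<phi> (\<eta> ^ s)" using m by simp
      thus ?thesis using b0 PF\<eta> by (intro exI[of _ "m mod b"] exI[of _ "\<eta> ^ s"]) simp
    qed
  qed
  have dec: "\<exists>Y n. (\<forall>j<b. Y j \<in> ssums PF (n j)) \<and> (\<Sum>j<b. n j) = length ws \<and> sum_list ws = crd Y"
    if "set ws \<subseteq> PE" for ws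
    using that
  proof (induct ws)
    case Nil
    show ?case
      by (intro exI[of _ "\<lambda>_. 0"] exI[of _ "\<lambda>_. 0"]) (simp add: ssums_0 crd_def \<phi>0)
  next
    case (Cons w ws)
    then obtain Y n where Y: "\<forall>j<b. Y j \<in> ssums PF (n j)" and n: "(\<Sum>j<b. n j) = length ws"
      and sw: "sum_list ws = crd Y" by auto
    have wPE: "w \<in> PE" using Cons.prems by simp
    obtain j0 u where j0: "j0 < b" and u: "u \<in> PF" and w: "w = \<zeta> ^ j0 * \<phi> u"
      using PEdec[OF wPE] by blast
    define Y' where "Y' j = Y j + (if j = j0 then u else 0)" for j
    define n' where "n' j = n j + (if j = j0 then 1 else 0)" for j
    have "\<forall>j<b. Y' j \<in> ssums PF (n' j)"
    proof (intro allI impI)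
      fix j assume "j < b"
      thus "Y' j \<in> ssums PF (n' j)"
        using Y ssums_add[OF _ ssums_single[OF u]] by (auto simp: Y'_def n'_def)
    qed
    moreover have "(\<Sum>j<b. n' j) = length (w # ws)"
      using n j0 by (simp add: n'_def sum.distrib)
    moreover have "sum_list (w # ws) = crd Y'"
    proof -
      have "(\<Sum>j<b. \<zeta> ^ j * \<phi> (if j = j0 then u else 0)) = (\<Sum>j<b. if j = j0 then \<zeta> ^ j * \<phi> u else 0)"
        by (intro sum.cong) (auto simp: \<phi>0)
      also have "\<dots> = \<zeta> ^ j0 * \<phi> u" using j0 by simp
      finally have "crd Y' = crd Y + \<zeta> ^ j0 * \<phi> u"
        by (simp add: crd_def Y'_def \<phi>add distrib_left sum.distrib)
      thus ?thesis using sw w by (simp add: add.commute)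
    qed
    ultimately show ?case by blast
  qed
  have partB: "waring_repr TYPE('f1) k (S div b)" if H: "waring_repr TYPE('f2) K S" for S
  proof -
    have H': "\<forall>x::'f2. x \<in> ssums PE S" using H by (simp add: waring_repr_sums PE_def)
    have "\<forall>y::'f1. y \<in> ssums PF (S div b)"
    proof
      fix y :: 'f1
      obtain ws where ws: "set ws \<subseteq> PE" "length ws = S" "crd (\<lambda>_. y) = sum_list ws"
        using H'[rule_format, of "crd (\<lambda>_. y)"] unfolding ssums_def by blast
      obtain Y n where Y: "\<forall>j<b. Y j \<in> ssums PF (n j)" and n: "(\<Sum>j<b. n j) = length ws"
        and sw: "sum_list ws = crd Y" using dec[OF ws(1)] by blast
      obtain j where j: "j < b" "n j \<le> S div b" using split_pick[OF _ b0] n ws(2) by metis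
      have "Y j = y" using uniq[of Y "\<lambda>_. y" j] sw ws(3) j by simp
      hence "y \<in> ssums PF (n j)" using Y j by auto
      thus "y \<in> ssums PF (S div b)" by (rule ssums_mono[OF PF0 _ j(2)])
    qed
    thus ?thesis by (simp add: waring_repr_sums PF_def)
  qed
  have exF: "waring_repr TYPE('f1) k (a * p)"
  proof -
    have fb: "\<forall>y::'f1. \<exists>n. (\<forall>i<a. n i < p) \<and> y = (\<Sum>i<a. of_nat (n i) * \<eta> ^ i)"
      by (rule F_basis[OF pr chF cardF inj\<eta>])
    have "\<forall>y::'f1. y \<in> ssums PF (a * p)"
    proof
      fix y :: 'f1
      obtain n where n: "\<forall>i<a. n i < p" and y: "y = (\<Sum>i<a. of_nat (n i) * \<eta> ^ i)"
        using fb by blast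
      have t: "of_nat (n i) * \<eta> ^ i \<in> ssums PF (n i)" for i by (rule ssums_nat[OF PF\<eta>])
      have "(\<Sum>i<a. of_nat (n i) * \<eta> ^ i) \<in> ssums PF (\<Sum>i<a. n i)" by (rule ssums_sum) (rule t)
      hence y1: "y \<in> ssums PF (\<Sum>i<a. n i)" using y by simp
      have "(\<Sum>i<a. n i) \<le> (\<Sum>i<a. p)" by (rule sum_mono) (use n in \<open>simp add: less_imp_le\<close>)
      hence le: "(\<Sum>i<a. n i) \<le> a * p" by simp
      show "y \<in> ssums PF (a * p)" by (rule ssums_mono[OF PF0 y1 le])
    qed
    thus ?thesis by (simp add: waring_repr_sums PF_def)
  qed
  have exE: "waring_repr TYPE('f2) K (b * (a * p))" by (rule partA[OF exF])
  define g1n where "g1n = waring_number TYPE('f1) k"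
  define g2n where "g2n = waring_number TYPE('f2) K"
  have r1: "waring_repr TYPE('f1) k g1n" unfolding g1n_def waring_number_def by (rule LeastI[of "\<lambda>s. waring_repr TYPE('f1) k s", OF exF])
  have r2: "waring_repr TYPE('f2) K g2n" unfolding g2n_def waring_number_def by (rule LeastI[of "\<lambda>s. waring_repr TYPE('f2) K s", OF exE])
  have A1: "g2n \<le> b * g1n" unfolding g2n_def waring_number_def by (rule Least_le[of "\<lambda>s. waring_repr TYPE('f2) K s", OF partA[OF r1]])
  have A2: "g1n \<le> g2n div b" unfolding g1n_def waring_number_def by (rule Least_le[of "\<lambda>s. waring_repr TYPE('f1) k s", OF partB[OF r2]])
  hence le1: "b * g1n \<le> b * (g2n div b)" by simp
  have "b * (g2n div b) \<le> g2n" by (metis div_mult_mod_eq le_add1 mult.commute)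
  hence eq: "g2n = b * g1n" using le1 A1 by linarith
  have "waring_exists TYPE('f1) k" using exF by (auto simp: waring_exists_def)
  moreover have "waring_exists TYPE('f2) K" using exE by (auto simp: waring_exists_def)
  ultimately show ?thesis using eq unfolding g1n_def g2n_def k_def K_def by blast
qed


end
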